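(* Let $G$ be a Tanner graph and $t\ge1$ an integer such that every irreducible lift-realizable pseudocodeword of $G$ has all components in $[0,t]$. Then every irreducible lift-realizable pseudocodeword $p=(p_1,\dots,p_n)$ of $G$ with support set $V$ satisfies (a) $w^{AWGN}(p)\ge \frac{2t^2}{(1+t^2)(t-1)+2t}|V|$ and (b) $w^{BSC}(p)\ge \frac1t|V|$.
   Context: A Tanner graph $G$ is a finite bipartite graph with variable nodes $v_1,\dots,v_n$ and check nodes; its code consists of all $x\in\{0,1\}^n$ with every check node having an even number of neighbours $v_i$ with $x_i=1$. A degree-$\ell$ lift replaces each node by $\ell$ copies and each edge by a perfect matching between copy-sets; a lift-realizable pseudocodeword $p\in\mathbb{Z}_{\ge0}^n$ is obtained from a codeword of the code of a finite lift by letting $p_i$ be the number of copies of $v_i$ assigned 1; it is irreducible if it is not a sum of two or more nonzero codewords/pseudocodewords. The support of $p$ is $\{i:p_i\neq0\}$. For nonzero $p$, with $e$ the smallest number such that the sum of the $e$ largest $p_i$ is at least $\frac12\sum_ip_i$, $w^{BSC}(p)=2e$ if equality holds and $2e-1$ otherwise; $w^{AWGN}(p)=(\sum_ip_i)^2/\sum_ip_i^2$. *)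

theory Defs
  imports Complex_Main
begin

text \<open>A Tanner graph is given by n variable nodes 0..<n, m check nodes 0..<m and an
  edge relation E i j (variable i adjacent to check j).  Vectors indexed by variable
  nodes are functions nat => nat that vanish outside {..<n}.\<close>

text \<open>A degree-l lift: each edge (i,j) is replaced by a perfect matching pi i j between
  the copies {..<l} of v_i and the copies {..<l} of c_j (copy a of v_i is joined to
  copy pi i j a of c_j).  x i a says copy a of v_i is assigned 1.  x is a codeword of the
  lift iff every copy b of every check c_j has an even number of neighbours assigned 1.\<close>
definition lift_codeword ::
  "nat \<Rightarrow> nat \<Rightarrow> (nat \<Rightarrow> nat \<Rightarrow> bool) \<Rightarrow> nat \<Rightarrow> (nat \<Rightarrow> nat \<Rightarrow> nat \<Rightarrow> nat)
   \<Rightarrow> (nat \<Rightarrow> nat \<Rightarrow> bool) \<Rightarrow> bool" where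
  "lift_codeword n m E l \<pi> x \<longleftrightarrow>
     (\<forall>i<n. \<forall>j<m. E i j \<longrightarrow> bij_betw (\<pi> i j) {..<l} {..<l}) \<and>
     (\<forall>j<m. \<forall>b<l. even (card {i. i < n \<and> E i j \<and> (\<exists>a<l. \<pi> i j a = b \<and> x i a)}))"

definition lift_pseudocodeword ::
  "nat \<Rightarrow> nat \<Rightarrow> (nat \<Rightarrow> nat \<Rightarrow> bool) \<Rightarrow> (nat \<Rightarrow> nat) \<Rightarrow> bool" where
  "lift_pseudocodeword n m E p \<longleftrightarrow>
     (\<exists>l \<pi> x. l \<ge> 1 \<and> lift_codeword n m E l \<pi> x \<and>
        (\<forall>i. p i = (if i < n then card {a. a < l \<and> x i a} else 0)))"

text \<open>Irreducible: nonzero and not a sum of two or more nonzero lift-realizable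
  pseudocodewords (codewords are the degree-1 case).\<close>
definition irreducible_pcw ::
  "nat \<Rightarrow> nat \<Rightarrow> (nat \<Rightarrow> nat \<Rightarrow> bool) \<Rightarrow> (nat \<Rightarrow> nat) \<Rightarrow> bool" where
  "irreducible_pcw n m E p \<longleftrightarrow>
     lift_pseudocodeword n m E p \<and> p \<noteq> (\<lambda>_. 0) \<and>
     \<not> (\<exists>qs. length qs \<ge> 2 \<and>
            (\<forall>q\<in>set qs. lift_pseudocodeword n m E q \<and> q \<noteq> (\<lambda>_. 0)) \<and>
            p = (\<lambda>i. \<Sum>q\<leftarrow>qs. q i))"

definition support :: "nat \<Rightarrow> (nat \<Rightarrow> nat) \<Rightarrow> nat set" where
  "support n p = {i. i < n \<and> p i \<noteq> 0}"

definition w_AWGN :: "nat \<Rightarrow> (nat \<Rightarrow> nat) \<Rightarrow> real" where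
  "w_AWGN n p = (real (\<Sum>i<n. p i))\<^sup>2 / real (\<Sum>i<n. (p i)\<^sup>2)"

definition top_sum :: "nat \<Rightarrow> (nat \<Rightarrow> nat) \<Rightarrow> nat \<Rightarrow> nat" where
  "top_sum n p e = Max {sum p S | S. S \<subseteq> {..<n} \<and> card S = e}"

definition w_BSC :: "nat \<Rightarrow> (nat \<Rightarrow> nat) \<Rightarrow> nat" where
  "w_BSC n p =
     (let e = (LEAST e. e \<le> n \<and> 2 * top_sum n p e \<ge> (\<Sum>i<n. p i))
      in if 2 * top_sum n p e = (\<Sum>i<n. p i) then 2 * e else 2 * e - 1)"

end

theory Submission
  imports Defs
begin

lemma c_le:
  fixes t :: real
  assumes "t = 1 \<or> t \<ge> 2"
  shows "2 * t\<^sup>2 / ((1 + t\<^sup>2) * (t - 1) + 2 * t) \<le> 4 * t / (1 + t)\<^sup>2"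
proof -
  have tp: "t \<ge> 1" using assms by auto
  have D: "(1 + t\<^sup>2) * (t - 1) + 2 * t > 0" using tp
    by (smt (verit) mult_nonneg_nonneg zero_le_power2)
  have "(t-1)^2 * (t-2) \<ge> 0" using assms by auto
  hence h2: "0 \<le> 2*t*((t-1)^2 * (t-2))" using tp by simp
  have eq: "4 * t * ((1 + t\<^sup>2) * (t - 1) + 2 * t) - 2 * t\<^sup>2 * (1 + t)\<^sup>2 = 2*t*((t-1)^2 * (t-2))"
    by (simp add: power2_eq_square algebra_simps)
  have key: "2 * t\<^sup>2 * (1 + t)\<^sup>2 \<le> 4 * t * ((1 + t\<^sup>2) * (t - 1) + 2 * t)"
    using h2 eq by linarith
  show ?thesis using D key tp
    by (simp add: divide_simps)
qed

lemma awgn_core: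
  fixes S Q k t :: real
  assumes "t = 1 \<or> t \<ge> 2" "k \<ge> 0" "Q > 0" "Q \<le> (1+t)*S - t*k"
  shows "2 * t\<^sup>2 / ((1 + t\<^sup>2) * (t - 1) + 2 * t) * k \<le> S\<^sup>2 / Q"
proof -
  let ?c = "2 * t\<^sup>2 / ((1 + t\<^sup>2) * (t - 1) + 2 * t)"
  have tp: "t \<ge> 1" using assms by auto
  have D: "(1 + t\<^sup>2) * (t - 1) + 2 * t > 0" using tp
    by (smt (verit) mult_nonneg_nonneg zero_le_power2)
  have c0: "?c \<ge> 0" using D by simp
  have "?c * k * Q \<le> ?c * k * ((1+t)*S - t*k)"
    using c0 assms by (intro mult_left_mono) auto
  also have "\<dots> \<le> 4 * t / (1 + t)\<^sup>2 * k * ((1+t)*S - t*k)"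
    using c_le[OF assms(1)] assms by (intro mult_right_mono) auto
  also have "\<dots> \<le> S\<^sup>2"
  proof -
    have "0 \<le> ((1+t)*S - 2*t*k)^2" by simp
    hence "4*t*k*((1+t)*S - t*k) \<le> (1+t)^2 * S^2"
      by (simp add: power2_eq_square algebra_simps)
    moreover have "(1+t)^2 > 0" using tp by simp
    ultimately show ?thesis by (simp add: divide_simps mult.commute mult.left_commute)
  qed
  finally show ?thesis using assms(3) by (simp add: divide_simps)
qed

theorem lemma3:
  fixes n m t :: nat and E :: "nat \<Rightarrow> nat \<Rightarrow> bool" and p :: "nat \<Rightarrow> nat"
  assumes "t \<ge> 1"
    and "\<forall>q. irreducible_pcw n m E q \<longrightarrow> (\<forall>i<n. q i \<le> t)"
    and "irreducible_pcw n m E p"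
  shows "w_AWGN n p \<ge> 2 * (real t)\<^sup>2 / ((1 + (real t)\<^sup>2) * (real t - 1) + 2 * real t)
            * real (card (support n p)) \<and>
         real (w_BSC n p) \<ge> real (card (support n p)) / real t"
proof -
  have le_t: "\<And>i. i < n \<Longrightarrow> p i \<le> t" using assms(2,3) by blast
  have out: "\<And>i. i \<ge> n \<Longrightarrow> p i = 0" using assms(3)
    unfolding irreducible_pcw_def lift_pseudocodeword_def by auto
  obtain i0 where i0: "p i0 \<noteq> 0" using assms(3) unfolding irreducible_pcw_def by auto
  with out have i0n: "i0 < n" by (meson not_le)
  define V where "V = support n p"
  define k where "k = card V"
  define S where "S = (\<Sum>i<n. p i)"
  have Vsub: "V \<subseteq> {..<n}" unfolding V_def support_def by auto
  have finV: "finite V" using Vsub finite_subset by blast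
  have i0V: "i0 \<in> V" using i0 i0n unfolding V_def support_def by auto
  have k1: "k \<ge> 1" unfolding k_def using finV i0V
    by (metis One_nat_def Suc_leI card_gt_0_iff empty_iff)
  have SV: "S = (\<Sum>i\<in>V. p i)" unfolding S_def
    by (rule sum.mono_neutral_right) (auto simp: V_def support_def)
  have "(\<Sum>i\<in>V. (1::nat)) \<le> (\<Sum>i\<in>V. p i)"
    by (rule sum_mono) (auto simp: V_def support_def)
  hence kS: "k \<le> S" unfolding SV k_def by simp
  have partA: "w_AWGN n p \<ge> 2 * (real t)\<^sup>2 / ((1 + (real t)\<^sup>2) * (real t - 1) + 2 * real t)
            * real (card (support n p))"
  proof -
    define Q where "Q = (\<Sum>i<n. (p i)\<^sup>2)"
    have QV: "Q = (\<Sum>i\<in>V. (p i)\<^sup>2)" unfolding Q_def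
      by (rule sum.mono_neutral_right) (auto simp: V_def support_def)
    have pq: "(p i0)\<^sup>2 \<le> Q" unfolding QV
      by (rule member_le_sum[OF i0V]) (auto simp: finV)
    have "0 < (p i0)\<^sup>2" using i0 by simp
    hence "0 < Q" using pq by (rule less_le_trans)
    hence Qpos: "real Q > 0" by simp
    have "real Q = (\<Sum>i\<in>V. (real (p i))\<^sup>2)" unfolding QV by simp
    also have "\<dots> \<le> (\<Sum>i\<in>V. (1 + real t) * real (p i) - real t)"
    proof (rule sum_mono)
      fix i assume iV: "i \<in> V"
      have a: "real (p i) \<ge> 1" using iV unfolding V_def support_def by auto
      have b: "real (p i) \<le> real t" using iV le_t Vsub by auto
      have "0 \<le> (real (p i) - 1) * (real t - real (p i))" using a b by simp
      thus "(real (p i))\<^sup>2 \<le> (1 + real t) * real (p i) - real t"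
        by (simp add: power2_eq_square algebra_simps)
    qed
    also have "\<dots> = (1 + real t) * real S - real t * real k"
      unfolding SV k_def by (simp add: sum_subtractf sum_distrib_left)
    finally have Qb: "real Q \<le> (1 + real t) * real S - real t * real k" .
    have tc: "real t = 1 \<or> real t \<ge> 2" using assms(1) by auto
    have "2 * (real t)\<^sup>2 / ((1 + (real t)\<^sup>2) * (real t - 1) + 2 * real t) * real k
          \<le> (real S)\<^sup>2 / real Q"
      by (rule awgn_core[OF tc _ Qpos Qb]) simp
    thus ?thesis unfolding w_AWGN_def S_def Q_def k_def V_def by simp
  qed
  have partB: "real (w_BSC n p) \<ge> real (card (support n p)) / real t"
  proof -
    define e where "e = (LEAST e. e \<le> n \<and> 2 * top_sum n p e \<ge> S)"
    have finT: "finite {sum p A | A. A \<subseteq> {..<n} \<and> card A = e'}" for e'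
    proof -
      have "{sum p A | A. A \<subseteq> {..<n} \<and> card A = e'} \<subseteq> sum p ` Pow {..<n}" by blast
      moreover have "finite (sum p ` Pow {..<n})" by (intro finite_imageI finite_Pow_iff[THEN iffD2] finite_lessThan)
      ultimately show ?thesis by (rule finite_subset)
    qed
    have topn: "top_sum n p n = S"
    proof -
      have "{sum p A | A. A \<subseteq> {..<n} \<and> card A = n} = {S}"
      proof -
        have h: "sum p A = S" if "A \<subseteq> {..<n}" "card A = n" for A
        proof -
          have "A = {..<n}" using card_subset_eq[OF finite_lessThan that(1)] that(2) by simp
          thus ?thesis unfolding S_def by simp
        qed
        show ?thesis
        proof (rule set_eqI, rule iffI)
          fix x assume "x \<in> {sum p A | A. A \<subseteq> {..<n} \<and> card A = n}"
          then obtain A where "x = sum p A" "A \<subseteq> {..<n}" "card A = n" by blast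
          thus "x \<in> {S}" using h by simp
        next
          fix x assume "x \<in> {S}"
          hence "x = sum p {..<n}" using S_def by simp
          thus "x \<in> {sum p A | A. A \<subseteq> {..<n} \<and> card A = n}" by force
        qed
      qed
      thus ?thesis unfolding top_sum_def by simp
    qed
    have ex: "n \<le> n \<and> 2 * top_sum n p n \<ge> S" using topn by simp
    have eprop: "e \<le> n \<and> 2 * top_sum n p e \<ge> S"
      unfolding e_def by (rule LeastI[of _ n]) (rule ex)
    have top0: "top_sum n p 0 = 0"
    proof -
      have "{sum p A | A. A \<subseteq> {..<n} \<and> card A = 0} = {0}"
      proof -
        have z: "A \<subseteq> {..<n} \<Longrightarrow> card A = 0 \<Longrightarrow> A = {}" for A
          using finite_subset[of A "{..<n}"] by simp
        have h: "sum p A = 0" if "A \<subseteq> {..<n}" "card A = 0" for A using z[OF that] by simp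
        show ?thesis
        proof (rule set_eqI, rule iffI)
          fix x assume "x \<in> {sum p A | A. A \<subseteq> {..<n} \<and> card A = 0}"
          then obtain A where "x = sum p A" "A \<subseteq> {..<n}" "card A = 0" by blast
          thus "x \<in> {0}" using h by simp
        next
          fix x assume "x \<in> {0::nat}"
          hence "x = sum p {}" by simp
          thus "x \<in> {sum p A | A. A \<subseteq> {..<n} \<and> card A = 0}" by force
        qed
      qed
      thus ?thesis unfolding top_sum_def by simp
    qed
    have e1: "e \<ge> 1"
    proof (rule ccontr)
      assume "\<not> e \<ge> 1" hence "e = 0" by simp
      with eprop top0 have "S = 0" by simp
      with kS k1 show False by simp
    qed
    obtain A0 where A0: "A0 \<subseteq> {..<n}" "card A0 = e"
      using obtain_subset_with_card_n[of e "{..<n}"] eprop by auto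
    have mem: "sum p A0 \<in> {sum p A | A. A \<subseteq> {..<n} \<and> card A = e}"
      by (intro CollectI exI[of _ A0]) (simp add: A0)
    have ne: "{sum p A | A. A \<subseteq> {..<n} \<and> card A = e} \<noteq> {}"
      using mem by (intro notI) simp
    have "top_sum n p e \<in> {sum p A | A. A \<subseteq> {..<n} \<and> card A = e}"
      unfolding top_sum_def by (rule Max_in[OF finT ne])
    hence "\<exists>A. top_sum n p e = sum p A \<and> A \<subseteq> {..<n} \<and> card A = e"
      by (simp only: mem_Collect_eq)
    then obtain A where AA: "top_sum n p e = sum p A \<and> A \<subseteq> {..<n} \<and> card A = e"
      by (rule exE)
    have A: "A \<subseteq> {..<n}" "card A = e" "sum p A = top_sum n p e" using AA by simp_all
    define T where "T = top_sum n p e"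
    have finA: "finite A" using A(1) finite_subset by blast
    have Tle: "T \<le> e * t"
    proof -
      have "sum p A \<le> sum (\<lambda>_. t) A" by (rule sum_mono) (use A(1) le_t in auto)
      thus ?thesis using A unfolding T_def by simp
    qed
    have Ssplit: "S = T + sum p ({..<n} - A)"
      unfolding S_def T_def A(3)[symmetric] using A(1)
      using sum.subset_diff[OF A(1), of p] by simp
    have kle: "k \<le> e + (S - T)"
    proof -
      have "V = (V \<inter> A) \<union> (V - A)" by auto
      hence "k \<le> card (V \<inter> A) + card (V - A)" unfolding k_def
        using card_Un_le[of "V \<inter> A" "V - A"] by simp
      moreover have "card (V \<inter> A) \<le> e" using card_mono[OF finA, of "V \<inter> A"] A(2) by simp
      moreover have "card (V - A) \<le> S - T"
      proof -
        have "card (V - A) = (\<Sum>i\<in>V - A. (1::nat))" by simp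
        also have "\<dots> \<le> (\<Sum>i\<in>V - A. p i)"
          by (rule sum_mono) (auto simp: V_def support_def)
        also have "\<dots> \<le> sum p ({..<n} - A)"
          by (rule sum_mono2) (use Vsub in auto)
        finally show ?thesis using Ssplit by simp
      qed
      ultimately show ?thesis by linarith
    qed
    have et: "int e * int t \<ge> int e + int t - 1"
    proof -
      have "0 \<le> (int e - 1) * (int t - 1)" using e1 assms(1) by simp
      thus ?thesis by (simp add: algebra_simps)
    qed
    have wdef: "w_BSC n p = (if 2 * T = S then 2 * e else 2 * e - 1)"
      unfolding w_BSC_def Let_def S_def[symmetric] e_def[symmetric] T_def[symmetric] ..
    have "real k \<le> real t * real (w_BSC n p)"
    proof (cases "2 * T = S")
      case True
      hence w: "w_BSC n p = 2 * e" unfolding wdef by simp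
      have "S - T = T" using True by simp
      hence "k \<le> e + T" using kle by simp
      also have "\<dots> \<le> e * t + e * t"
      proof (rule add_mono)
        show "e \<le> e * t" using assms(1) by simp
      qed (rule Tle)
      finally have "k \<le> 2 * e * t" by simp
      hence "real k \<le> real (2 * e * t)" by (simp only: of_nat_le_iff)
      thus ?thesis unfolding w by (simp add: algebra_simps)
    next
      case False
      hence w: "w_BSC n p = 2 * e - 1" unfolding wdef by simp
      have "2 * T > S" using False eprop T_def by simp
      hence "int k \<le> int e + int T - 1" using kle by linarith
      also have "\<dots> \<le> int e + int e * int t - 1"
      proof -
        have "int T \<le> int (e * t)" using Tle by (simp only: of_nat_le_iff)
        thus ?thesis by simp
      qed
      also have "\<dots> \<le> (2 * int e - 1) * int t" using et by (simp add: algebra_simps)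
      finally have "int k \<le> int (2 * e - 1) * int t" using e1 by (simp add: of_nat_diff)
      hence "k \<le> (2 * e - 1) * t" by (simp only: of_nat_mult[symmetric] of_nat_le_iff)
      hence "real k \<le> real ((2 * e - 1) * t)" by (simp only: of_nat_le_iff)
      thus ?thesis unfolding w by (simp only: of_nat_mult mult.commute)
    qed
    moreover have "real t > 0" using assms(1) by simp
    ultimately show ?thesis unfolding k_def V_def by (simp add: divide_simps mult.commute)
  qed
  show ?thesis using partA partB by blast
qed

end
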